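(* Let $\Gamma_2$ be the mapping class group of a closed orientable surface of genus $2$, and let $U(2)\subset Sp(4,\mathbb R)$ be a maximal compact subgroup. Then the natural map $$Hom(\Gamma_2,U(2))\to Hom(\Gamma_2,Sp(4,\mathbb R))$$ induced by the inclusion is not surjective on path-components.
   Context: For a finitely generated group $\pi$ and a Lie group $G$, $Hom(\pi,G)$ is the space of homomorphisms $\pi\to G$, topologized as a subspace of $G^k$ via evaluation on a finite generating set; a map of spaces is surjective on path-components if every path-component of the target contains a point of the image. *)

theory Defs
  imports "HOL-Analysis.Analysis"
begin

text \<open>Standard symplectic form on R^4 (indices 0,1,2,3 of the numeral type 4):
  J = [[0, I],[-I, 0]].\<close>
definition J4 :: "real^4^4" where
  "J4 = (\<chi> i j. if (i = 0 \<and> j = 2) \<or> (i = 1 \<and> j = 3) then 1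
                 else if (i = 2 \<and> j = 0) \<or> (i = 3 \<and> j = 1) then -1 else 0)"

definition Sp4 :: "(real^4^4) set" where
  "Sp4 = {M. transpose M ** J4 ** M = J4}"

definition U2 :: "(real^4^4) set" where
  "U2 = {M \<in> Sp4. transpose M ** M = mat 1}"

text \<open>Evaluation of a positive word in the generators a_1..a_5 (indices 0..4).\<close>
definition wrd :: "(real^4^4)^5 \<Rightarrow> 5 list \<Rightarrow> real^4^4" where
  "wrd \<rho> xs = foldr (\<lambda>i M. (\<rho> $ i) ** M) xs (mat 1)"

text \<open>Birman--Hilden presentation of the genus 2 mapping class group:
  generators a_1,...,a_5 (Dehn twists along a chain of curves), relations:
  far commutation, braid relations, (a1 a2 a3 a4 a5)^6 = 1,
  (a1 a2 a3 a4 a5^2 a4 a3 a2 a1)^2 = 1, and a1 commutes with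
  a1 a2 a3 a4 a5^2 a4 a3 a2 a1.\<close>
definition gamma2_rel :: "(real^4^4)^5 \<Rightarrow> bool" where
  "gamma2_rel \<rho> \<longleftrightarrow>
     (\<forall>(i,j)\<in>{(0::5,2::5),(0,3),(0,4),(1,3),(1,4),(2,4)}. wrd \<rho> [i,j] = wrd \<rho> [j,i]) \<and>
     (\<forall>(i,j)\<in>{(0::5,1::5),(1,2),(2,3),(3,4)}. wrd \<rho> [i,j,i] = wrd \<rho> [j,i,j]) \<and>
     wrd \<rho> (concat (replicate 6 [0,1,2,3,4])) = mat 1 \<and>
     wrd \<rho> (concat (replicate 2 [0,1,2,3,4,4,3,2,1,0])) = mat 1 \<and>
     wrd \<rho> (0 # [0,1,2,3,4,4,3,2,1,0]) = wrd \<rho> ([0,1,2,3,4,4,3,2,1,0] @ [0])"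

text \<open>Hom(\<Gamma>_2, G) as a subspace of G^5 via evaluation on the generators.\<close>
definition HomGamma2 :: "(real^4^4) set \<Rightarrow> ((real^4^4)^5) set" where
  "HomGamma2 G = {\<rho>. (\<forall>i. \<rho> $ i \<in> G) \<and> gamma2_rel \<rho>}"

end

theory Submission
  imports Defs
begin

definition ix :: "4 \<Rightarrow> nat" where
  "ix i = (if i = 0 then 0 else if i = 1 then 1 else if i = 2 then 2 else 3)"

lemma ix_simps [simp]: "ix 0 = 0" "ix 1 = 1" "ix 2 = 2" "ix 3 = 3" "ix 4 = 0"
  by (simp_all add: ix_def)

lemma exhaust4: "(x::4) = 0 \<or> x = 1 \<or> x = 2 \<or> x = 3"
  using exhaust_4[of x] by auto

lemma ix_lt: "ix i < 4" by (simp add: ix_def)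

lemma all4: "(\<forall>i::4. P i) \<longleftrightarrow> P 0 \<and> P 1 \<and> P 2 \<and> P 3"
  by (metis exhaust4)

definition ml :: "real list list \<Rightarrow> real^4^4" where
  "ml L = (\<chi> i j. L ! ix i ! ix j)"

definition lmul :: "real list list \<Rightarrow> real list list \<Rightarrow> real list list" where
  "lmul A B = map (\<lambda>i. map (\<lambda>j. \<Sum>k<4. A!i!k * B!k!j) [0..<4]) [0..<4]"

lemma ml_mult: "ml A ** ml B = ml (lmul A B)"
proof -
  show ?thesis
    by (simp add: vec_eq_iff all4 ml_def lmul_def matrix_matrix_mult_def sum_4 eval_nat_numeral ac_simps)
qed

definition ltr :: "real list list \<Rightarrow> real list list" where
  "ltr A = map (\<lambda>i. map (\<lambda>j. A!j!i) [0..<4]) [0..<4]"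

lemma ml_tr: "transpose (ml A) = ml (ltr A)"
proof -
  show ?thesis
    by (simp add: vec_eq_iff all4 ml_def ltr_def transpose_def eval_nat_numeral)
qed

definition "IdL = [[1,0,0,0],[0,1,0,0],[0,0,1,0],[0,0,0,1::real]]"
definition "JL = [[0,0,1,0],[0,0,0,1],[-1,0,0,0],[0,-1,0,0::real]]"

lemma ml_Id: "mat 1 = ml IdL"
  by (simp add: vec_eq_iff all4 ml_def IdL_def mat_def)

lemma ml_J: "J4 = ml JL"
  by (simp add: vec_eq_iff all4 ml_def JL_def J4_def)

lemma test3: "mat 1 + mat 1 + mat 1 = (mat 3 :: real^4^4)" "(mat 3 :: real^4^4) ** mat (1/3) = mat 1"
  by (simp_all add: vec_eq_iff all4 mat_def matrix_matrix_mult_def sum_4)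

lemma exhaust5: "(x::5) = 0 \<or> x = 1 \<or> x = 2 \<or> x = 3 \<or> x = 4"
proof (induct x)
  case (of_int z)
  then have "z = 0 \<or> z = 1 \<or> z = 2 \<or> z = 3 \<or> z = 4" by fastforce
  then show ?case by auto
qed

lemma all5: "(\<forall>i::5. P i) \<longleftrightarrow> P 0 \<and> P 1 \<and> P 2 \<and> P 3 \<and> P 4"
  by (metis exhaust5)

definition ix5 :: "5 \<Rightarrow> nat" where
  "ix5 i = (if i = 0 then 0 else if i = 1 then 1 else if i = 2 then 2 else if i = 3 then 3 else 4)"

lemma ix5_simps [simp]: "ix5 0 = 0" "ix5 1 = 1" "ix5 2 = 2" "ix5 3 = 3" "ix5 4 = 4"
  by (simp_all add: ix5_def)

definition RL :: "real list list list" where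
  "RL = [ [[1,0,-1,0],[0,1,0,0],[0,0,1,0],[0,0,0,1]],
          [[1,0,0,0],[0,1,0,0],[1,0,1,0],[0,0,0,1]],
          [[1,0,-1,1],[0,1,1,-1],[0,0,1,0],[0,0,0,1]],
          [[1,0,0,0],[0,1,0,0],[0,0,1,0],[0,1,0,1]],
          [[1,0,0,0],[0,1,0,-1],[0,0,1,0],[0,0,0,1]] ]"

definition rho0 :: "(real^4^4)^5" where
  "rho0 = (\<chi> i. ml (RL ! ix5 i))"

definition lw :: "5 list \<Rightarrow> real list list" where
  "lw xs = foldr (\<lambda>i L. lmul (RL ! ix5 i) L) xs IdL"

lemma wrd_Cons: "wrd \<rho> (x # xs) = \<rho> $ x ** wrd \<rho> xs"
  by (simp add: wrd_def)

lemma wrd_Nil: "wrd \<rho> [] = mat 1"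
  by (simp add: wrd_def)

lemma wrd_rho0: "wrd rho0 xs = ml (lw xs)"
  by (induct xs) (simp_all add: wrd_Nil wrd_Cons lw_def ml_Id rho0_def ml_mult)

lemma lmul_explicit:
  "lmul [[a00,a01,a02,a03],[a10,a11,a12,a13],[a20,a21,a22,a23],[a30,a31,a32,a33]]
        [[b00,b01,b02,b03],[b10,b11,b12,b13],[b20,b21,b22,b23],[b30,b31,b32,b33]] =
   [[a00*b00+a01*b10+a02*b20+a03*b30, a00*b01+a01*b11+a02*b21+a03*b31, a00*b02+a01*b12+a02*b22+a03*b32, a00*b03+a01*b13+a02*b23+a03*b33],
    [a10*b00+a11*b10+a12*b20+a13*b30, a10*b01+a11*b11+a12*b21+a13*b31, a10*b02+a11*b12+a12*b22+a13*b32, a10*b03+a11*b13+a12*b23+a13*b33],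
    [a20*b00+a21*b10+a22*b20+a23*b30, a20*b01+a21*b11+a22*b21+a23*b31, a20*b02+a21*b12+a22*b22+a23*b32, a20*b03+a21*b13+a22*b23+a23*b33],
    [a30*b00+a31*b10+a32*b20+a33*b30, a30*b01+a31*b11+a32*b21+a33*b31, a30*b02+a31*b12+a32*b22+a33*b32, a30*b03+a31*b13+a32*b23+a33*b33]]"
  by (simp add: lmul_def eval_nat_numeral)

lemma lw_c: "lw [0,1,2,3,4] = [[0,0,-1,0],[0,0,1,-1],[1,1,0,0],[0,1,0,0]]"
  by (simp add: lw_def RL_def IdL_def lmul_explicit eval_nat_numeral ml_Id)

lemma rho0_rel: "gamma2_rel rho0"
  unfolding gamma2_rel_def wrd_rho0
  by (simp add: lw_def RL_def IdL_def lmul_explicit eval_nat_numeral ml_Id)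

lemma rho0_Sp: "rho0 $ i \<in> Sp4"
proof -
  have "transpose (ml (RL ! k)) ** J4 ** ml (RL ! k) = J4" if "k < 5" for k
    unfolding ml_tr ml_J ml_mult
    using that by (auto simp: less_Suc_eq eval_nat_numeral RL_def JL_def lmul_explicit ltr_def)
  then show ?thesis using exhaust5[of i] unfolding Sp4_def rho0_def
    by auto
qed

lemma rho0_Hom: "rho0 \<in> HomGamma2 Sp4"
  using rho0_Sp rho0_rel by (simp add: HomGamma2_def)

lemma rho0_c: "wrd rho0 [0,1,2,3,4] ** wrd rho0 [0,1,2,3,4] \<noteq> mat 1"
proof
  assume "wrd rho0 [0,1,2,3,4] ** wrd rho0 [0,1,2,3,4] = mat 1"
  then have "(wrd rho0 [0,1,2,3,4] ** wrd rho0 [0,1,2,3,4]) $ 0 $ 0 = (mat 1 :: real^4^4) $ 0 $ 0" by simp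
  then show False unfolding wrd_rho0 ml_mult ml_Id
    by (simp add: ml_def lw_c lmul_explicit IdL_def)
qed

lemma four_eq [simp]: "(4::4) = 0" by simp
definition commJ :: "real^4^4 \<Rightarrow> bool" where
  "commJ M \<longleftrightarrow> M ** J4 = J4 ** M"

lemma commJ_entries:
  assumes "commJ M"
  shows "M$2$0 = - M$0$2" "M$2$1 = - M$0$3" "M$2$2 = M$0$0" "M$2$3 = M$0$1"
        "M$3$0 = - M$1$2" "M$3$1 = - M$1$3" "M$3$2 = M$1$0" "M$3$3 = M$1$1"
proof -
  have e: "(M ** J4)$i$j = (J4 ** M)$i$j" for i j using assms by (simp add: commJ_def)
  note ee = e[unfolded matrix_matrix_mult_def J4_def, simplified, unfolded sum_4, simplified]
  show "M$2$0 = - M$0$2" using ee[of 0 0] by simp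
  show "M$2$1 = - M$0$3" using ee[of 0 1] by simp
  show "M$2$2 = M$0$0" using ee[of 0 2] by simp
  show "M$2$3 = M$0$1" using ee[of 0 3] by simp
  show "M$3$0 = - M$1$2" using ee[of 1 0] by simp
  show "M$3$1 = - M$1$3" using ee[of 1 1] by simp
  show "M$3$2 = M$1$0" using ee[of 1 2] by simp
  show "M$3$3 = M$1$1" using ee[of 1 3] by simp
qed

lemma commJ_mult: "commJ M \<Longrightarrow> commJ N \<Longrightarrow> commJ (M ** N)"
  unfolding commJ_def by (metis matrix_mul_assoc)

fun cmul :: "complex\<times>complex\<times>complex\<times>complex \<Rightarrow> complex\<times>complex\<times>complex\<times>complex \<Rightarrow> complex\<times>complex\<times>complex\<times>complex" where
 "cmul (p,q,r,s) (a,b,c,d) = (p * a + q * c, p * b + q * d, r * a + s * c, r * b + s * d)"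

definition cm :: "real^4^4 \<Rightarrow> complex\<times>complex\<times>complex\<times>complex" where
  "cm M = (Complex (M$0$0) (M$0$2), Complex (M$0$1) (M$0$3), Complex (M$1$0) (M$1$2), Complex (M$1$1) (M$1$3))"

lemma cm_mult:
  assumes "commJ M" "commJ N"
  shows "cm (M ** N) = cmul (cm M) (cm N)"
  using commJ_entries[OF assms(2)]
  by (simp add: cm_def matrix_matrix_mult_def sum_4 complex_eq_iff algebra_simps)

lemma cm_eq:
  assumes "commJ M" "commJ N" "cm M = cm N"
  shows "M = N"
proof -
  have r: "M$0$j = N$0$j \<and> M$1$j = N$1$j" for j
    using assms(3) exhaust4[of j] by (auto simp: cm_def)
  show ?thesis
    using commJ_entries[OF assms(1)] commJ_entries[OF assms(2)] r
    by (simp add: vec_eq_iff all4)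
qed


definition scal :: "real^4^4 \<Rightarrow> bool" where
  "scal M \<longleftrightarrow> (case cm M of (p,q,r,s) \<Rightarrow> q = 0 \<and> r = 0 \<and> p = s)"

lemma scal_comm:
  assumes "commJ M" "commJ N" "scal M"
  shows "M ** N = N ** M"
proof -
  obtain p q r s where c: "cm M = (p,q,r,s)" by (cases "cm M") auto
  obtain a b c' d where d: "cm N = (a,b,c',d)" by (cases "cm N") auto
  show ?thesis
    apply (rule cm_eq)
      apply (simp_all add: commJ_mult assms cm_mult)
    using assms(3) c d by (simp add: scal_def algebra_simps)
qed

lemma par3:
  fixes a b c x1 y1 z1 x2 y2 z2 :: complex
  assumes "a * y1 = b * x1" "a * z1 = c * x1" "b * z1 = c * y1"
          "a * y2 = b * x2" "a * z2 = c * x2" "b * z2 = c * y2"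
      and "\<not> (a = 0 \<and> b = 0 \<and> c = 0)"
  shows "x1 * y2 = x2 * y1 \<and> x1 * z2 = x2 * z1 \<and> y1 * z2 = y2 * z1"
proof -
  consider "a \<noteq> 0" | "b \<noteq> 0" | "c \<noteq> 0" using assms(7) by blast
  then show ?thesis
  proof cases
    case 1
    have "a * (x1 * y2 - x2 * y1) = 0" "a * (x1 * z2 - x2 * z1) = 0" "a * a * (y1 * z2 - y2 * z1) = 0"
      using assms(1-6) by algebra+
    then show ?thesis using 1 by auto
  next
    case 2
    have "b * b * (x1 * y2 - x2 * y1) = 0" "b * b * (x1 * z2 - x2 * z1) = 0" "b * (y1 * z2 - y2 * z1) = 0"
      using assms(1-6) by algebra+
    then show ?thesis using 2 by auto
  next
    case 3
    have "c * c * (x1 * y2 - x2 * y1) = 0" "c * (x1 * z2 - x2 * z1) = 0" "c * (y1 * z2 - y2 * z1) = 0"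
      using assms(1-6) by algebra+
    then show ?thesis using 3 by auto
  qed
qed

lemma commut_c:
  fixes p q r s p1 q1 r1 s1 p2 q2 r2 s2 :: complex
  assumes "cmul (p,q,r,s) (p1,q1,r1,s1) = cmul (p1,q1,r1,s1) (p,q,r,s)"
      and "cmul (p,q,r,s) (p2,q2,r2,s2) = cmul (p2,q2,r2,s2) (p,q,r,s)"
      and "\<not> (q = 0 \<and> r = 0 \<and> p = s)"
    shows "cmul (p1,q1,r1,s1) (p2,q2,r2,s2) = cmul (p2,q2,r2,s2) (p1,q1,r1,s1)"
proof -
  from assms(1) have a1: "p * p1 + q * r1 = p1 * p + q1 * r" "p * q1 + q * s1 = p1 * q + q1 * s"
     "r * p1 + s * r1 = r1 * p + s1 * r" by simp_all
  from assms(2) have a2: "p * p2 + q * r2 = p2 * p + q2 * r" "p * q2 + q * s2 = p2 * q + q2 * s"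
     "r * p2 + s * r2 = r2 * p + s2 * r" by simp_all
  have e1: "q * r1 = r * q1" "q * (p1 - s1) = (p - s) * q1" "r * (p1 - s1) = (p - s) * r1"
    using a1 by algebra+
  have e2: "q * r2 = r * q2" "q * (p2 - s2) = (p - s) * q2" "r * (p2 - s2) = (p - s) * r2"
    using a2 by algebra+
  have nz: "\<not> (q = 0 \<and> r = 0 \<and> p - s = 0)" using assms(3) by simp
  from par3[OF e1 e2 nz] have "q1 * r2 = q2 * r1" "q1 * (p2 - s2) = q2 * (p1 - s1)" "r1 * (p2 - s2) = r2 * (p1 - s1)"
    by auto
  then have "p1 * p2 + q1 * r2 = p2 * p1 + q2 * r1" "p1 * q2 + q1 * s2 = p2 * q1 + q2 * s1"
     "r1 * p2 + s1 * r2 = r2 * p1 + s2 * r1" "r1 * q2 + s1 * s2 = r2 * q1 + s2 * s1"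
    by algebra+
  then show ?thesis by simp
qed

lemma comm_comm:
  assumes "commJ X" "commJ Y" "commJ Z" "\<not> scal X" "X ** Y = Y ** X" "X ** Z = Z ** X"
  shows "Y ** Z = Z ** Y"
proof -
  obtain p q r s where c: "cm X = (p,q,r,s)" by (cases "cm X") auto
  obtain p1 q1 r1 s1 where c1: "cm Y = (p1,q1,r1,s1)" by (cases "cm Y") auto
  obtain p2 q2 r2 s2 where c2: "cm Z = (p2,q2,r2,s2)" by (cases "cm Z") auto
  have h1: "cmul (p,q,r,s) (p1,q1,r1,s1) = cmul (p1,q1,r1,s1) (p,q,r,s)"
    using arg_cong[OF assms(5), of cm] by (simp add: cm_mult assms(1-3) c c1 del: cmul.simps)
  have h2: "cmul (p,q,r,s) (p2,q2,r2,s2) = cmul (p2,q2,r2,s2) (p,q,r,s)"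
    using arg_cong[OF assms(6), of cm] by (simp add: cm_mult assms(1-3) c c2 del: cmul.simps)
  have nz: "\<not> (q = 0 \<and> r = 0 \<and> p = s)" using assms(4) c by (simp add: scal_def)
  have "cmul (p1,q1,r1,s1) (p2,q2,r2,s2) = cmul (p2,q2,r2,s2) (p1,q1,r1,s1)"
    by (rule commut_c[OF h1 h2 nz])
  then show ?thesis
    by (intro cm_eq) (simp_all add: commJ_mult assms(1-3) cm_mult c1 c2 del: cmul.simps)
qed

lemma braid_eq:
  fixes X Y Xi Yi :: "real^4^4"
  assumes "X ** (Y ** X) = Y ** (X ** Y)" "X ** Y = Y ** X" "Xi ** X = mat 1" "Y ** Yi = mat 1"
  shows "X = Y"
proof -
  have "X ** (X ** Y) = X ** (Y ** Y)"
    using assms(1,2) by (metis matrix_mul_assoc)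
  then have "Xi ** (X ** (X ** Y)) = Xi ** (X ** (Y ** Y))" by simp
  then have "X ** Y = Y ** Y" by (simp add: matrix_mul_assoc assms(3))
  then have "X ** Y ** Yi = Y ** Y ** Yi" by simp
  then show ?thesis by (simp add: matrix_mul_assoc[symmetric] assms(4))
qed



lemma U2_facts:
  assumes "M \<in> U2"
  shows "commJ M" "transpose M ** M = mat 1" "M ** transpose M = mat 1"
proof -
  have s: "transpose M ** J4 ** M = J4" and o: "transpose M ** M = mat 1"
    using assms by (auto simp: U2_def Sp4_def)
  have o2: "M ** transpose M = mat 1" using o matrix_left_right_inverse by blast
  have "M ** J4 = M ** (transpose M ** J4 ** M)" using s by simp
  also have "\<dots> = (M ** transpose M) ** J4 ** M" by (simp add: matrix_mul_assoc)
  also have "\<dots> = J4 ** M" using o2 by simp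
  finally show "commJ M" by (simp add: commJ_def)
  show "transpose M ** M = mat 1" by (rule o)
  show "M ** transpose M = mat 1" by (rule o2)
qed

lemma allEq:
  assumes "\<sigma> \<in> HomGamma2 U2"
  shows "\<sigma> $ i = \<sigma> $ 0"
proof -
  define A0 where "A0 = \<sigma> $ 0"
  define A1 where "A1 = \<sigma> $ 1"
  define A2 where "A2 = \<sigma> $ 2"
  define A3 where "A3 = \<sigma> $ 3"
  define A4 where "A4 = \<sigma> $ 4"
  have U: "\<sigma> $ k \<in> U2" for k using assms by (simp add: HomGamma2_def)
  have cJ: "commJ (\<sigma> $ k)" for k using U2_facts(1)[OF U] .
  have li: "transpose (\<sigma> $ k) ** (\<sigma> $ k) = mat 1" for k using U2_facts(2)[OF U] .
  have ri: "(\<sigma> $ k) ** transpose (\<sigma> $ k) = mat 1" for k using U2_facts(3)[OF U] .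
  have rel: "gamma2_rel \<sigma>" using assms by (simp add: HomGamma2_def)
  then have c02: "A0 ** A2 = A2 ** A0" and c03: "A0 ** A3 = A3 ** A0" and c04: "A0 ** A4 = A4 ** A0"
    and c13: "A1 ** A3 = A3 ** A1" and c14: "A1 ** A4 = A4 ** A1" and c24: "A2 ** A4 = A4 ** A2"
    and b01: "A0 ** (A1 ** A0) = A1 ** (A0 ** A1)" and b12: "A1 ** (A2 ** A1) = A2 ** (A1 ** A2)"
    and b23: "A2 ** (A3 ** A2) = A3 ** (A2 ** A3)" and b34: "A3 ** (A4 ** A3) = A4 ** (A3 ** A4)"
    unfolding gamma2_rel_def A0_def A1_def A2_def A3_def A4_def
    by (simp_all add: wrd_Cons wrd_Nil)
  have beq: "X = Y" if "X ** (Y ** X) = Y ** (X ** Y)" "X ** Y = Y ** X" "X = \<sigma> $ k" "Y = \<sigma> $ l" for X Y k l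
    using braid_eq[OF that(1,2), of "transpose X" "transpose Y"] li[of k] ri[of l] that(3,4) by simp
  have sc: "X ** Y = Y ** X" if "scal X" "X = \<sigma> $ k" "Y = \<sigma> $ l" for X Y k l
    using scal_comm[of X Y] cJ[of k] cJ[of l] that by simp
  have cc: "Y ** Z = Z ** Y" if "\<not> scal X" "X ** Y = Y ** X" "X ** Z = Z ** X"
     "X = \<sigma> $ k" "Y = \<sigma> $ l" "Z = \<sigma> $ m" for X Y Z k l m
    using comm_comm[of X Y Z] cJ[of k] cJ[of l] cJ[of m] that by simp
  have all: "A0 = A1 \<and> A1 = A2 \<and> A2 = A3 \<and> A3 = A4"
  proof (cases "scal A0")
    case True
    have e1: "A0 = A1" using beq[OF b01 sc[OF True A0_def A1_def] A0_def A1_def] .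
    have e2: "A1 = A2" using beq[OF b12 sc[where X=A1 and Y=A2 and k=1 and l=2] A1_def A2_def] True e1 A1_def A2_def by simp
    have e3: "A2 = A3" using beq[OF b23 sc[where X=A2 and Y=A3 and k=2 and l=3] A2_def A3_def] True e1 e2 A2_def A3_def by simp
    have e4: "A3 = A4" using beq[OF b34 sc[where X=A3 and Y=A4 and k=3 and l=4] A3_def A4_def] True e1 e2 e3 A3_def A4_def by simp
    show ?thesis using e1 e2 e3 e4 by simp
  next
    case n0: False
    show ?thesis
    proof (cases "scal A3")
      case True
      have e3: "A3 = A4" using beq[OF b34 sc[OF True A3_def A4_def] A3_def A4_def] .
      have e2: "A2 = A3" using beq[OF b23 sc[OF True A3_def A2_def, symmetric] A2_def A3_def] .
      have e1: "A1 = A2" using beq[OF b12 sc[where X=A2 and Y=A1 and k=2 and l=1, symmetric] A1_def A2_def] True e2 A1_def A2_def by simp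
      have e0: "A0 = A1" using beq[OF b01 sc[where X=A1 and Y=A0 and k=1 and l=0, symmetric] A0_def A1_def] True e1 e2 A0_def A1_def by simp
      show ?thesis using e0 e1 e2 e3 by simp
    next
      case n3: False
      have e23: "A2 = A3" using beq[OF b23 cc[OF n0 c02 c03 A0_def A2_def A3_def] A2_def A3_def] .
      have e34: "A3 = A4" using beq[OF b34 cc[OF n0 c03 c04 A0_def A3_def A4_def] A3_def A4_def] .
      have e01: "A0 = A1" using beq[OF b01 cc[OF n3 c03[symmetric] c13[symmetric] A3_def A0_def A1_def] A0_def A1_def] .
      have e12: "A1 = A2" using beq[OF b12 _ A1_def A2_def] c13 e23 by simp
      show ?thesis using e01 e12 e23 e34 by simp
    qed
  qed
  show ?thesis using exhaust5[of i] all unfolding A0_def A1_def A2_def A3_def A4_def by auto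
qed

definition mpow :: "real^4^4 \<Rightarrow> nat \<Rightarrow> real^4^4" where
  "mpow A n = (((**) A) ^^ n) (mat 1)"

lemma mpow_add: "mpow A (m + n) = mpow A m ** mpow A n"
  by (induct m) (simp_all add: mpow_def matrix_mul_assoc)

lemma wrd_const: "(\<And>i. \<rho> $ i = A) \<Longrightarrow> wrd \<rho> xs = mpow A (length xs)"
  by (induct xs) (simp_all add: wrd_Cons wrd_Nil mpow_def)

lemma U2_c:
  assumes "\<sigma> \<in> HomGamma2 U2"
  shows "wrd \<sigma> [0,1,2,3,4] ** wrd \<sigma> [0,1,2,3,4] = mat 1"
proof -
  define A where "A = \<sigma> $ 0"
  have e: "\<And>i. \<sigma> $ i = A" using allEq[OF assms] A_def by simp
  have rel: "gamma2_rel \<sigma>" using assms by (simp add: HomGamma2_def)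
  have p30: "mpow A 30 = mat 1" and p20: "mpow A 20 = mat 1"
    using rel unfolding gamma2_rel_def wrd_const[OF e] by (simp_all add: eval_nat_numeral)
  have "mpow A 10 = mpow A 10 ** mpow A 20" using p20 by simp
  also have "\<dots> = mpow A 30" by (simp flip: mpow_add)
  finally have p10: "mpow A 10 = mat 1" using p30 by simp
  have m: "mpow A 5 ** mpow A 5 = mpow A 10" using mpow_add[of A 5 5] by simp
  have l: "length [0::5,1,2,3,4] = 5" by simp
  show ?thesis unfolding wrd_const[OF e] l using m p10 by simp
qed


lemma cont_mm:
  fixes f g :: "'a::topological_space \<Rightarrow> real^4^4"
  shows "continuous_on S f \<Longrightarrow> continuous_on S g \<Longrightarrow> continuous_on S (\<lambda>t. f t ** g t)"
  unfolding matrix_matrix_mult_def by (intro continuous_intros)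

lemma cont_wrd:
  fixes f :: "'a::topological_space \<Rightarrow> (real^4^4)^5"
  shows "continuous_on S f \<Longrightarrow> continuous_on S (\<lambda>t. wrd (f t) xs)"
proof (induct xs)
  case Nil then show ?case by (simp add: wrd_Nil)
next
  case (Cons x xs)
  then show ?case unfolding wrd_Cons by (intro cont_mm continuous_intros) auto
qed

lemma cont_det:
  fixes f :: "'a::topological_space \<Rightarrow> real^4^4"
  shows "continuous_on S f \<Longrightarrow> continuous_on S (\<lambda>t. det (f t))"
  unfolding det_def by (intro continuous_intros)

lemma wrd_append: "wrd \<rho> (xs @ ys) = wrd \<rho> xs ** wrd \<rho> ys"
  by (induct xs) (simp_all add: wrd_Cons wrd_Nil matrix_mul_assoc)

definition Fm :: "(real^4^4)^5 \<Rightarrow> real^4^4" where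
  "Fm \<rho> = (let Q = wrd \<rho> [0,1,2,3,4] ** wrd \<rho> [0,1,2,3,4] in Q ** Q + Q + mat 1)"

lemma Fm_det:
  assumes "gamma2_rel \<rho>" "det (Fm \<rho>) \<noteq> 0"
  shows "wrd \<rho> [0,1,2,3,4] ** wrd \<rho> [0,1,2,3,4] = mat 1"
proof -
  define G where "G = wrd \<rho> [0,1,2,3,4]"
  define Q where "Q = G ** G"
  have "wrd \<rho> (concat (replicate 6 [0,1,2,3,4])) = mat 1"
    using assms(1) by (simp add: gamma2_rel_def)
  moreover have "concat (replicate 6 [0::5,1,2,3,4]) = [0,1,2,3,4] @ ([0,1,2,3,4] @ ([0,1,2,3,4] @ ([0,1,2,3,4] @ ([0,1,2,3,4] @ [0,1,2,3,4]))))"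
    by (simp add: eval_nat_numeral)
  ultimately have "G ** (G ** (G ** (G ** (G ** G)))) = mat 1"
    unfolding G_def by (simp only: wrd_append)
  then have Q3: "Q ** (Q ** Q) = mat 1" unfolding Q_def by (simp add: matrix_mul_assoc)
  have F: "Fm \<rho> = Q ** Q + Q + mat 1" unfolding Fm_def Q_def G_def Let_def by simp
  have QF: "Q ** Fm \<rho> = Fm \<rho>"
    unfolding F matrix_add_ldistrib Q3 by (simp add: add_ac)
  obtain Fi where Fi: "Fm \<rho> ** Fi = mat 1"
    using assms(2) invertible_det_nz[of "Fm \<rho>"] unfolding invertible_def by blast
  have "Q = Q ** (Fm \<rho> ** Fi)" using Fi by simp
  also have "\<dots> = mat 1" using QF Fi by (metis matrix_mul_assoc)
  finally show ?thesis unfolding Q_def G_def .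
qed

lemma Fm_one:
  assumes "wrd \<rho> [0,1,2,3,4] ** wrd \<rho> [0,1,2,3,4] = mat 1"
  shows "Fm \<rho> = mat 3"
  using assms test3(1) by (simp add: Fm_def Let_def)

lemma det3: "det (mat 3 :: real^4^4) \<noteq> 0"
proof
  assume "det (mat 3 :: real^4^4) = 0"
  then have "det ((mat 3 :: real^4^4) ** mat (1/3)) = 0" by (simp add: det_mul)
  then show False using test3(2) by simp
qed

theorem mainTheorem12:
  shows "\<exists>\<rho>\<in>HomGamma2 Sp4. \<forall>\<sigma>\<in>HomGamma2 U2. \<not> path_component (HomGamma2 Sp4) \<sigma> \<rho>"
proof (intro bexI[OF _ rho0_Hom] ballI notI)
  fix \<sigma> assume s: "\<sigma> \<in> HomGamma2 U2" and pc: "path_component (HomGamma2 Sp4) \<sigma> rho0"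
  then obtain g where g: "path g" "path_image g \<subseteq> HomGamma2 Sp4" "g 0 = \<sigma>" "g 1 = rho0"
    unfolding path_component_def pathstart_def pathfinish_def by blast
  define c0 where "c0 = det (mat 3 :: real^4^4)"
  have c0: "c0 \<noteq> 0" using det3 c0_def by simp
  define \<phi> where "\<phi> t = det (Fm (g t))" for t
  have cont: "continuous_on {0..1} \<phi>"
    unfolding \<phi>_def Fm_def Let_def
    using g(1) unfolding path_def
    by (intro cont_det continuous_intros cont_mm cont_wrd) auto
  have inS: "g t \<in> HomGamma2 Sp4" if "t \<in> {0..1}" for t
    using g(2) that unfolding path_image_def by blast
  have key: "\<phi> t = c0" if "t \<in> {0..1}" "\<phi> t \<noteq> 0" for t
  proof -
    have "gamma2_rel (g t)" using inS[OF that(1)] by (simp add: HomGamma2_def)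
    from Fm_det[OF this] that(2) have "wrd (g t) [0,1,2,3,4] ** wrd (g t) [0,1,2,3,4] = mat 1"
      by (simp add: \<phi>_def)
    then show ?thesis unfolding \<phi>_def c0_def by (simp add: Fm_one)
  qed
  have p0: "\<phi> 0 = c0"
    unfolding \<phi>_def c0_def g(3) using U2_c[OF s] by (simp add: Fm_one)
  have p1: "\<phi> 1 = 0"
  proof (rule ccontr)
    assume "\<phi> 1 \<noteq> 0"
    then have "wrd rho0 [0,1,2,3,4] ** wrd rho0 [0,1,2,3,4] = mat 1"
      using Fm_det[OF rho0_rel] g(4) by (simp add: \<phi>_def)
    then show False using rho0_c by simp
  qed
  obtain x where x: "0 \<le> x" "x \<le> 1" "\<phi> x = c0 / 2"
  proof (cases "c0 > 0")
    case True
    then show ?thesis using IVT2'[of \<phi> 1 "c0/2" 0] cont p0 p1 that by auto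
  next
    case False
    then have "c0 < 0" using c0 by simp
    then show ?thesis using IVT'[of \<phi> 0 "c0/2" 1] cont p0 p1 that by auto
  qed
  then have "\<phi> x = c0" using key[of x] c0 by simp
  then show False using x(3) c0 by simp
qed

end
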